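(* Let $d\ge1$, let $\mathcal A$ be the generator of a mass-action chemistry on $\mathbb Z_{\ge0}^d$ with a designated species $S$, and let $N$ be the associated coarse-grained compartment model with arbitrary parameters $\kappa_I,\kappa_E,\kappa_F,\kappa_C\ge0$, arbitrary inflow distribution $\mu$ (not necessarily with finite mean) and arbitrary fragmentation kernel $\psi$. Suppose there exist $w\in\mathbb R_{>0}^d$ and constants $c,c'>0$ such that, with $f(x):=w\cdot x$, we have $\mathcal Af(x)\le c f(x)+c'$ for every $x\in\mathbb Z_{\ge0}^d$. Then $N$ is not explosive.
   Context: A chemical reaction network on species $S_1,\dots,S_d$ is a finite set $\mathcal R$ of reactions $\nu\to\nu'$ with $\nu,\nu'\in\mathbb Z_{\ge0}^d$, each with a rate constant $\kappa_{\nu\to\nu'}\ge0$. Under stochastic mass-action kinetics, reaction $\nu\to\nu'$ fires in state $x\in\mathbb Z_{\ge0}^d$ at rate $\lambda_{\nu\to\nu'}(x)=\kappa_{\nu\to\nu'}\prod_{j=1}^d\binom{x_j}{\nu_j}$ (with $\binom a0=1$ and $\binom ab=0$ for $0\le a<b$) and moves the state to $x+\nu'-\nu$. The chemistry is the continuous-time Markov chain on $\mathbb Z_{\ge0}^d$ with generator $\mathcal Af(x)=\sum_{\nu\to\nu'\in\mathcal R}\lambda_{\nu\to\nu'}(x)\big(f(x+\nu'-\nu)-f(x)\big)$. One species is designated $S$, and $S(x)$ denotes the coordinate of $x$ corresponding to $S$. The coarse-grained compartment model $N$ is determined by the chemistry, constants $\kappa_I,\kappa_E,\kappa_F,\kappa_C\ge0$,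 a probability measure $\mu$ on $\mathbb Z_{\ge0}^d$, and a fragmentation kernel $\psi:\mathbb Z_{\ge0}^d\times\mathbb Z_{\ge0}^d\to[0,1]$ with $\psi(x,y)=0$ whenever $y_i>x_i$ for some $i$ and $y\mapsto\psi(x,y)$ a probability measure for each $x$. Its state space is $\mathcal N=\{n:\mathbb Z_{\ge0}^d\to\mathbb Z_{\ge0}\text{ with finite support}\}$, where $n_x$ is the number of compartments with internal state $x$; $e_x\in\mathcal N$ is the indicator of $x$. $N$ is the continuous-time Markov chain on $\mathcal N$ with generator $\mathcal LV(n)=\sum_{x}\Big[\sum_{\nu\to\nu'}n_x\lambda_{\nu\to\nu'}(x)\big(V(n-e_x+e_{x+\nu'-\nu})-V(n)\big)+\kappa_I\mu(x)\big(V(n+e_x)-V(n)\big)+\kappa_En_x\big(V(n-e_x)-V(n)\big)+\kappa_FS(x)n_x\sum_{y}\psi(x,y)\big(V(n-e_x+e_y+e_{x-y})-V(n)\big)+\kappa_C\binom{n_x}{2}\big(V(n-2e_x+e_{2x})-V(n)\big)+\sum_{y\ne x}\kappa_C\frac{n_xn_y}{2}\big(V(n-e_x-e_y+e_{x+y})-V(n)\big)\Big]$. (Thus: the chemistry runs independently inside each compartment; new compartments arrive at rate $\kappa_I$ with state distributed as $\mu$; each compartment exits at rate $\kappa_E$; a compartment in state $x$ fragments at rate $\kappa_FS(x)$ into daughters in states $y$ and $x-y$ with $y\sim\psi(x,\cdot)$; each pair of compartments coagulates at rate $\kappa_C$ into one compartment with the summed state.) A continuous-time Markov chain is explosive if from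 some initial state it makes infinitely many jumps in finite time with positive probability, and non-explosive otherwise. *)

theory Defs
  imports "HOL-Probability.Probability" "HOL-Library.Multiset"
begin

text \<open>A CTMC on a state type 's is given by its jump rates Q a b (rate of jumping from a to b).
  Self-transitions are not jumps, so they are discarded.\<close>

definition jump_rate :: "('s \<Rightarrow> 's \<Rightarrow> real) \<Rightarrow> 's \<Rightarrow> 's \<Rightarrow> real" where
  "jump_rate Q a b = (if b = a then 0 else Q a b)"

definition total_rate :: "('s \<Rightarrow> 's \<Rightarrow> real) \<Rightarrow> 's \<Rightarrow> ennreal" where
  "total_rate Q a = (\<integral>\<^sup>+ b. ennreal (jump_rate Q a b) \<partial>count_space UNIV)"

text \<open>jump_cdf Q k a t is the probability P_a(J_k \<le> t), where J_k is the k-th jump time of the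
  chain started at a (J_0 = 0; J_{k+1} = J_k + holding time; an absorbing state has infinite
  holding time).  It is computed by conditioning on the first holding time s (exponential with
  parameter q(a)) and the first jump target b (chosen with probability Q a b / q(a)).\<close>
primrec jump_cdf :: "('s \<Rightarrow> 's \<Rightarrow> real) \<Rightarrow> nat \<Rightarrow> 's \<Rightarrow> real \<Rightarrow> ennreal" where
  "jump_cdf Q 0 a t = (if 0 \<le> t then 1 else 0)"
| "jump_cdf Q (Suc k) a t =
     (\<integral>\<^sup>+ s. indicator {0..t} s *
        (\<integral>\<^sup>+ b. ennreal (jump_rate Q a b * exp (- enn2real (total_rate Q a) * s))
                  * jump_cdf Q k b (t - s) \<partial>count_space UNIV) \<partial>lborel)"

text \<open>Explosive: from some initial state, with positive probability infinitely many jumps occur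
  in finite time, i.e. P_a(\<forall>k. J_k \<le> t) = inf_k P_a(J_k \<le> t) > 0 for some a and t.\<close>
definition ctmc_explosive :: "('s \<Rightarrow> 's \<Rightarrow> real) \<Rightarrow> bool" where
  "ctmc_explosive Q \<longleftrightarrow> (\<exists>a t. (INF k. jump_cdf Q k a t) > 0)"

text \<open>Species are indexed by a finite type 'i (d = CARD('i)); states are 'i \<Rightarrow> nat.
  A reaction is a pair (\<nu>, \<nu>').\<close>

definition ma_rate :: "(('i \<Rightarrow> nat) \<times> ('i \<Rightarrow> nat) \<Rightarrow> real) \<Rightarrow> ('i \<Rightarrow> nat) \<times> ('i \<Rightarrow> nat)
    \<Rightarrow> ('i::finite \<Rightarrow> nat) \<Rightarrow> real" where
  "ma_rate \<kappa> r x = \<kappa> r * (\<Prod>j\<in>UNIV. real (x j choose fst r j))"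

text \<open>State after firing reaction r in state x (x + \<nu>' - \<nu>; only used when x \<ge> \<nu>,
  otherwise the rate vanishes).\<close>
definition react :: "('i \<Rightarrow> nat) \<times> ('i \<Rightarrow> nat) \<Rightarrow> ('i \<Rightarrow> nat) \<Rightarrow> ('i \<Rightarrow> nat)" where
  "react r x = (\<lambda>j. x j + snd r j - fst r j)"

definition chem_gen :: "(('i \<Rightarrow> nat) \<times> ('i \<Rightarrow> nat)) set \<Rightarrow> (('i \<Rightarrow> nat) \<times> ('i \<Rightarrow> nat) \<Rightarrow> real)
    \<Rightarrow> (('i::finite \<Rightarrow> nat) \<Rightarrow> real) \<Rightarrow> ('i \<Rightarrow> nat) \<Rightarrow> real" where
  "chem_gen R \<kappa> f x = (\<Sum>r\<in>R. ma_rate \<kappa> r x * (f (react r x) - f x))"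

text \<open>A state n \<in> \<N> (finitely supported counts n_x) is a multiset of compartment states;
  n_x = count n x and e_x = {#x#}.  comp_rate gives the total rate of transitions n \<rightarrow> m,
  summing the contributions of all mechanisms of the generator L.
  Parameters: s = designated species S, kI kE kF kC, inflow distribution mu,
  fragmentation kernel psi.\<close>

definition comp_rate ::
  "(('i \<Rightarrow> nat) \<times> ('i \<Rightarrow> nat)) set \<Rightarrow> (('i \<Rightarrow> nat) \<times> ('i \<Rightarrow> nat) \<Rightarrow> real) \<Rightarrow> 'i
   \<Rightarrow> real \<Rightarrow> real \<Rightarrow> real \<Rightarrow> real \<Rightarrow> ('i \<Rightarrow> nat) pmf \<Rightarrow> (('i \<Rightarrow> nat) \<Rightarrow> ('i \<Rightarrow> nat) pmf)
   \<Rightarrow> ('i::finite \<Rightarrow> nat) multiset \<Rightarrow> ('i \<Rightarrow> nat) multiset \<Rightarrow> real" where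
  "comp_rate R \<kappa> s kI kE kF kC \<mu> \<psi> n m =
     (\<Sum>x\<in>set_mset n. \<Sum>r\<in>R. real (count n x) * ma_rate \<kappa> r x *
         (if m = n - {#x#} + {#react r x#} then 1 else 0))
   + kI * measure_pmf.prob \<mu> {x. m = n + {#x#}}
   + (\<Sum>x\<in>set_mset n. kE * real (count n x) * (if m = n - {#x#} then 1 else 0))
   + (\<Sum>x\<in>set_mset n. kF * real (x s) * real (count n x) *
         measure_pmf.prob (\<psi> x) {y. m = n - {#x#} + {#y#} + {#(\<lambda>j. x j - y j)#}})
   + (\<Sum>x\<in>set_mset n. kC * real (count n x choose 2) *
         (if m = n - {#x, x#} + {#(\<lambda>j. x j + x j)#} then 1 else 0))
   + (\<Sum>x\<in>set_mset n. \<Sum>y\<in>set_mset n - {x}. kC * real (count n x) * real (count n y) / 2 *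
         (if m = n - {#x, y#} + {#(\<lambda>j. x j + y j)#} then 1 else 0))"

end

theory Submission
  imports Defs
begin


lemma exp_int:
  assumes l: "0 < (l::real)"
  shows "(\<integral>\<^sup>+ s. indicator {0..} s * ennreal (exp (- l * s)) \<partial>lborel) = ennreal (1 / l)"
proof -
  have "(\<integral>\<^sup>+ x. ennreal (erlang_density 0 l x * x ^ 0) \<partial>lborel) = 1"
    using nn_integral_erlang_ith_moment[OF l, of 0 0] by simp
  moreover have "(\<integral>\<^sup>+ x. ennreal (erlang_density 0 l x * x ^ 0) \<partial>lborel)
     = (\<integral>\<^sup>+ x. ennreal l * (indicator {0..} x * ennreal (exp (- l * x))) \<partial>lborel)"
    by (intro nn_integral_cong) (auto simp: erlang_density_def ennreal_mult'' mult.commute split: split_indicator)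
  moreover have "\<dots> = ennreal l * (\<integral>\<^sup>+ s. indicator {0..} s * ennreal (exp (- l * s)) \<partial>lborel)"
    by (intro nn_integral_cmult) auto
  ultimately have "ennreal l * (\<integral>\<^sup>+ s. indicator {0..} s * ennreal (exp (- l * s)) \<partial>lborel) = 1" by simp
  then have "ennreal (1 / l) * (ennreal l * (\<integral>\<^sup>+ s. indicator {0..} s * ennreal (exp (- l * s)) \<partial>lborel)) = ennreal (1 / l)"
    by simp
  also have "ennreal (1 / l) * (ennreal l * (\<integral>\<^sup>+ s. indicator {0..} s * ennreal (exp (- l * s)) \<partial>lborel))
     = ennreal (1 / l * l) * (\<integral>\<^sup>+ s. indicator {0..} s * ennreal (exp (- l * s)) \<partial>lborel)"
    using l by (subst mult.assoc[symmetric], subst ennreal_mult''[symmetric]) auto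
  finally show ?thesis using l by simp
qed



primrec uu :: "('s \<Rightarrow> 's \<Rightarrow> real) \<Rightarrow> real \<Rightarrow> nat \<Rightarrow> 's \<Rightarrow> ennreal" where
  "uu Q l 0 a = 1"
| "uu Q l (Suc k) a = (\<integral>\<^sup>+ b. ennreal (jump_rate Q a b) * uu Q l k b \<partial>count_space UNIV)
      / ennreal (l + enn2real (total_rate Q a))"

lemma total_rate_eq:
  assumes "total_rate Q a \<noteq> \<top>"
  shows "total_rate Q a = ennreal (enn2real (total_rate Q a))"
  using assms by (simp add: less_top)

lemma uu_le_1:
  assumes fin: "\<And>a. total_rate Q a \<noteq> \<top>" and l: "l > 0"
  shows "uu Q l k a \<le> 1"
proof (induction k arbitrary: a)
  case 0 then show ?case by simp
next
  case (Suc k)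
  define q where "q = enn2real (total_rate Q a)"
  have q0: "q \<ge> 0" unfolding q_def by simp
  have "(\<integral>\<^sup>+ b. ennreal (jump_rate Q a b) * uu Q l k b \<partial>count_space UNIV)
       \<le> (\<integral>\<^sup>+ b. ennreal (jump_rate Q a b) \<partial>count_space UNIV)"
    by (intro nn_integral_mono) (metis Suc mult.right_neutral mult_left_mono zero_le)
  also have "\<dots> = ennreal q" unfolding q_def using fin[of a] by (simp add: total_rate_def less_top)
  finally have le: "(\<integral>\<^sup>+ b. ennreal (jump_rate Q a b) * uu Q l k b \<partial>count_space UNIV) \<le> ennreal q" .
  have "uu Q l (Suc k) a \<le> ennreal q / ennreal (l + q)"
    unfolding uu.simps q_def[symmetric] by (intro divide_right_mono_ennreal le)
  also have "\<dots> = ennreal (q / (l + q))" using q0 l by (intro divide_ennreal) auto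
  also have "\<dots> \<le> 1" using q0 l by simp
  finally show ?case .
qed

lemma jump_cdf_le:
  assumes fin: "\<And>a. total_rate Q a \<noteq> \<top>" and l: "l > 0"
  shows "jump_cdf Q k a t \<le> ennreal (exp (l * t)) * uu Q l k a"
proof (induction k arbitrary: a t)
  case 0 then show ?case using l by simp
next
  case (Suc k)
  define q where "q = enn2real (total_rate Q a)"
  have q0: "q \<ge> 0" unfolding q_def by simp
  define S where "S = (\<integral>\<^sup>+ b. ennreal (jump_rate Q a b) * uu Q l k b \<partial>count_space UNIV)"
  have inner: "(\<integral>\<^sup>+ b. ennreal (jump_rate Q a b * exp (- q * s)) * jump_cdf Q k b (t - s) \<partial>count_space UNIV)
     \<le> ennreal (exp (l * t)) * S * ennreal (exp (- (q + l) * s))" for s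
  proof -
    have "(\<integral>\<^sup>+ b. ennreal (jump_rate Q a b * exp (- q * s)) * jump_cdf Q k b (t - s) \<partial>count_space UNIV)
       \<le> (\<integral>\<^sup>+ b. (ennreal (exp (l * t)) * ennreal (exp (- (q + l) * s))) * (ennreal (jump_rate Q a b) * uu Q l k b) \<partial>count_space UNIV)"
    proof (intro nn_integral_mono)
      fix b
      have "ennreal (jump_rate Q a b * exp (- q * s)) * jump_cdf Q k b (t - s)
          \<le> ennreal (jump_rate Q a b) * ennreal (exp (- q * s)) * (ennreal (exp (l * (t - s))) * uu Q l k b)"
        by (simp add: ennreal_mult'' mult_left_mono Suc)
      also have "\<dots> = (ennreal (exp (- q * s)) * ennreal (exp (l * (t - s)))) * (ennreal (jump_rate Q a b) * uu Q l k b)"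
        by (simp add: ac_simps)
      also have "ennreal (exp (- q * s)) * ennreal (exp (l * (t - s))) = ennreal (exp (l * t)) * ennreal (exp (- (q + l) * s))"
        by (simp add: ennreal_mult''[symmetric] mult_exp_exp algebra_simps del: ennreal_mult'')
      finally show "ennreal (jump_rate Q a b * exp (- q * s)) * jump_cdf Q k b (t - s)
          \<le> (ennreal (exp (l * t)) * ennreal (exp (- (q + l) * s))) * (ennreal (jump_rate Q a b) * uu Q l k b)" .
    qed
    also have "\<dots> = (ennreal (exp (l * t)) * ennreal (exp (- (q + l) * s))) * S"
      unfolding S_def by (rule nn_integral_cmult) simp
    finally show ?thesis by (simp add: ac_simps)
  qed
  have "jump_cdf Q (Suc k) a t \<le> (\<integral>\<^sup>+ s. (ennreal (exp (l * t)) * S) * (indicator {0..} s * ennreal (exp (- (q + l) * s))) \<partial>lborel)"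
    unfolding jump_cdf.simps q_def[symmetric]
  proof (intro nn_integral_mono)
    fix s
    show "indicator {0..t} s * (\<integral>\<^sup>+ b. ennreal (jump_rate Q a b * exp (- q * s)) * jump_cdf Q k b (t - s) \<partial>count_space UNIV)
        \<le> ennreal (exp (l * t)) * S * (indicator {0..} s * ennreal (exp (- (q + l) * s)))"
      using inner[of s] by (auto simp: split: split_indicator)
  qed
  also have "\<dots> = (ennreal (exp (l * t)) * S) * (\<integral>\<^sup>+ s. indicator {0..} s * ennreal (exp (- (q + l) * s)) \<partial>lborel)"
    by (rule nn_integral_cmult) simp
  also have "\<dots> = (ennreal (exp (l * t)) * S) * ennreal (1 / (q + l))"
    using exp_int[of "q + l"] q0 l by simp
  also have "\<dots> = ennreal (exp (l * t)) * (S / ennreal (l + q))"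
  proof -
    have inv: "ennreal (1 / (q + l)) = inverse (ennreal (l + q))"
      using q0 l by (subst inverse_ennreal) (auto simp: inverse_eq_divide add.commute)
    show ?thesis by (simp only: inv divide_ennreal_def mult.assoc)
  qed
  also have "\<dots> = ennreal (exp (l * t)) * uu Q l (Suc k) a"
    by (simp only: uu.simps S_def q_def)
  finally show ?case .
qed



lemma lyap_step_real:
  fixes q Qm l m V D Ir \<alpha> :: real
  assumes "0 \<le> q" "q \<le> Qm" "0 < l" "0 < m" "0 \<le> D" "0 \<le> \<alpha>" "0 \<le> V"
    and "Ir \<le> q * V + l * V + D"
  shows "(\<alpha> * q + Ir / m + D / (l * m) * q) / (l + q) \<le> Qm / (l + Qm) * \<alpha> + (V + D / l) / m"
proof -
  have "q / (l + q) \<le> Qm / (l + Qm)"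
    using assms by (simp add: divide_simps) (simp add: algebra_simps mult_left_mono)
  hence 1: "\<alpha> * q / (l + q) \<le> Qm / (l + Qm) * \<alpha>"
    using assms by (metis mult.commute mult_right_mono times_divide_eq_right)
  have "Ir / m + D / (l * m) * q \<le> ((q + l) * V + D + D * q / l) / m"
    using assms by (simp add: divide_simps) (simp add: algebra_simps)
  also have "\<dots> = (l + q) * ((V + D / l) / m)"
    using assms by (simp add: field_simps)
  finally have 2: "(Ir / m + D / (l * m) * q) / (l + q) \<le> (V + D / l) / m"
    using assms by (simp add: divide_simps mult.commute)
  have "(\<alpha> * q + Ir / m + D / (l * m) * q) / (l + q) = \<alpha> * q / (l + q) + (Ir / m + D / (l * m) * q) / (l + q)"
    by (simp add: add_divide_distrib)
  with 1 2 show ?thesis by linarith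
qed

lemma lyap:
  fixes Q :: "'s \<Rightarrow> 's \<Rightarrow> real" and V :: "'s \<Rightarrow> real"
  assumes fin: "\<And>a. total_rate Q a \<noteq> \<top>" and l: "l > 0" and m: "m > 0" and D: "D \<ge> 0"
    and V0: "\<And>a. V a \<ge> 0"
    and drift: "\<And>a. (\<integral>\<^sup>+ b. ennreal (jump_rate Q a b) * ennreal (V b) \<partial>count_space UNIV)
                \<le> ennreal (enn2real (total_rate Q a) * V a + l * V a + D)"
    and sub: "\<And>a. V a \<le> m \<Longrightarrow> enn2real (total_rate Q a) \<le> Qm"
    and Qm: "Qm \<ge> 0"
  shows "uu Q l k a \<le> ennreal ((Qm / (l + Qm)) ^ k + (V a + D / l) / m)"
proof (induction k arbitrary: a)
  case 0
  then show ?case using V0[of a] m D l by simp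
next
  case (Suc k)
  define \<alpha> where "\<alpha> = (Qm / (l + Qm)) ^ k"
  have \<alpha>0: "\<alpha> \<ge> 0" unfolding \<alpha>_def using Qm l by simp
  show ?case
  proof (cases "V a \<le> m")
    case False
    have "uu Q l (Suc k) a \<le> 1" by (rule uu_le_1[OF fin l])
    also have "1 \<le> ennreal ((Qm / (l + Qm)) ^ Suc k + (V a + D / l) / m)"
    proof -
      have "0 \<le> D / l" using D l by simp
      hence "m \<le> V a + D / l" using False by linarith
      hence 1: "1 \<le> (V a + D / l) / m" using m by simp
      have "0 \<le> (Qm / (l + Qm)) ^ Suc k" using Qm l by simp
      with 1 have "1 \<le> (Qm / (l + Qm)) ^ Suc k + (V a + D / l) / m" by linarith
      thus ?thesis using ennreal_leI by fastforce
    qed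
    finally show ?thesis .
  next
    case True
    define q where "q = enn2real (total_rate Q a)"
    have q0: "q \<ge> 0" unfolding q_def by simp
    have qQ: "q \<le> Qm" unfolding q_def by (rule sub[OF True])
    have tq: "(\<integral>\<^sup>+ b. ennreal (jump_rate Q a b) \<partial>count_space UNIV) = ennreal q"
      unfolding q_def using fin[of a] by (simp add: total_rate_def less_top)
    define Ib where "Ib = (\<integral>\<^sup>+ b. ennreal (jump_rate Q a b) * ennreal (V b) \<partial>count_space UNIV)"
    have Ible: "Ib \<le> ennreal (q * V a + l * V a + D)" unfolding Ib_def q_def by (rule drift)
    then obtain Ir where Ir: "Ib = ennreal Ir" "Ir \<ge> 0"
      by (metis ennreal_cases ennreal_less_top top.not_eq_extremum linorder_not_less)
    have IrLe: "Ir \<le> q * V a + l * V a + D"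
    proof -
      have "ennreal Ir \<le> ennreal (q * V a + l * V a + D)" using Ible unfolding Ir(1) .
      moreover have "0 \<le> q * V a + l * V a + D" using q0 l D V0[of a] by simp
      ultimately show ?thesis using ennreal_le_iff by blast
    qed
    have "(\<integral>\<^sup>+ b. ennreal (jump_rate Q a b) * uu Q l k b \<partial>count_space UNIV)
       \<le> (\<integral>\<^sup>+ b. ennreal (jump_rate Q a b) * (ennreal \<alpha> + ennreal (1 / m) * ennreal (V b) + ennreal (D / (l * m))) \<partial>count_space UNIV)"
    proof (intro nn_integral_mono mult_left_mono)
      fix b
      have "uu Q l k b \<le> ennreal (\<alpha> + (V b + D / l) / m)" using Suc \<alpha>_def by simp
      also have "\<alpha> + (V b + D / l) / m = \<alpha> + 1 / m * V b + D / (l * m)"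
        using m l by (simp add: field_simps)
      also have "ennreal \<dots> = ennreal \<alpha> + ennreal (1 / m) * ennreal (V b) + ennreal (D / (l * m))"
        using \<alpha>0 m l D V0[of b] by (subst ennreal_mult''[symmetric]) auto
      finally show "uu Q l k b \<le> ennreal \<alpha> + ennreal (1 / m) * ennreal (V b) + ennreal (D / (l * m))" .
    qed simp
    also have "\<dots> = (\<integral>\<^sup>+ b. ennreal \<alpha> * ennreal (jump_rate Q a b) + ennreal (1 / m) * (ennreal (jump_rate Q a b) * ennreal (V b))
                        + ennreal (D / (l * m)) * ennreal (jump_rate Q a b) \<partial>count_space UNIV)"
      by (intro nn_integral_cong) (simp add: algebra_simps)
    also have "\<dots> = ennreal \<alpha> * ennreal q + ennreal (1 / m) * Ib + ennreal (D / (l * m)) * ennreal q"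
      by (simp add: nn_integral_add nn_integral_cmult tq Ib_def)
    also have "\<dots> = ennreal (\<alpha> * q + Ir / m + D / (l * m) * q)"
    proof -
      have 1: "ennreal \<alpha> * ennreal q = ennreal (\<alpha> * q)" using q0 by (simp add: ennreal_mult'')
      have 2: "ennreal (1 / m) * ennreal Ir = ennreal (Ir / m)" using Ir m by (simp add: ennreal_mult''[symmetric])
      have 3: "ennreal (D / (l * m)) * ennreal q = ennreal (D / (l * m) * q)" using q0 by (rule ennreal_mult''[symmetric])
      have 4: "ennreal (\<alpha> * q) + ennreal (Ir / m) + ennreal (D / (l * m) * q) = ennreal (\<alpha> * q + Ir / m + D / (l * m) * q)"
        using \<alpha>0 q0 m l D Ir by (simp add: ennreal_plus)
      show ?thesis unfolding Ir(1) 1 2 3 4 ..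
    qed
    finally have num: "(\<integral>\<^sup>+ b. ennreal (jump_rate Q a b) * uu Q l k b \<partial>count_space UNIV) \<le> ennreal (\<alpha> * q + Ir / m + D / (l * m) * q)" .
    have "uu Q l (Suc k) a \<le> ennreal (\<alpha> * q + Ir / m + D / (l * m) * q) / ennreal (l + q)"
      unfolding uu.simps q_def[symmetric] by (intro divide_right_mono_ennreal num)
    also have "\<dots> = ennreal ((\<alpha> * q + Ir / m + D / (l * m) * q) / (l + q))"
      using \<alpha>0 q0 m l D Ir by (intro divide_ennreal) auto
    also have "\<dots> \<le> ennreal (Qm / (l + Qm) * \<alpha> + (V a + D / l) / m)"
      by (intro ennreal_leI lyap_step_real[OF q0 qQ l m D \<alpha>0 V0 IrLe])
    finally show ?thesis unfolding \<alpha>_def by simp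
  qed
qed



lemma nn_point:
  assumes "finite I" "\<And>i. i \<in> I \<Longrightarrow> c i \<ge> 0"
  shows "(\<integral>\<^sup>+ b. ennreal (\<Sum>i\<in>I. c i * (if b = t i then 1 else 0)) * g b \<partial>count_space UNIV)
         = (\<Sum>i\<in>I. ennreal (c i) * g (t i))"
proof -
  have "(\<integral>\<^sup>+ b. ennreal (\<Sum>i\<in>I. c i * (if b = t i then 1 else 0)) * g b \<partial>count_space UNIV)
      = (\<integral>\<^sup>+ b. (\<Sum>i\<in>I. (ennreal (c i) * g (t i)) * indicator {t i} b) \<partial>count_space UNIV)"
  proof (intro nn_integral_cong)
    fix b
    have "ennreal (\<Sum>i\<in>I. c i * (if b = t i then 1 else 0)) = (\<Sum>i\<in>I. ennreal (c i * (if b = t i then 1 else 0)))"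
      using assms by (intro sum_ennreal[symmetric]) auto
    also have "\<dots> = (\<Sum>i\<in>I. ennreal (c i) * indicator {t i} b)"
      by (intro sum.cong refl) (auto split: split_indicator)
    finally show "ennreal (\<Sum>i\<in>I. c i * (if b = t i then 1 else 0)) * g b
        = (\<Sum>i\<in>I. (ennreal (c i) * g (t i)) * indicator {t i} b)"
      by (auto simp: sum_distrib_right intro!: sum.cong split: split_indicator)
  qed
  also have "\<dots> = (\<Sum>i\<in>I. \<integral>\<^sup>+ b. (ennreal (c i) * g (t i)) * indicator {t i} b \<partial>count_space UNIV)"
    by (rule nn_integral_sum) auto
  also have "\<dots> = (\<Sum>i\<in>I. ennreal (c i) * g (t i))"
    by (intro sum.cong refl) (simp add: nn_integral_cmult_indicator)
  finally show ?thesis .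
qed

lemma nn_point2:
  assumes "finite I" "\<And>i. i \<in> I \<Longrightarrow> finite (J i)" "\<And>i j. i \<in> I \<Longrightarrow> j \<in> J i \<Longrightarrow> c i j \<ge> 0"
  shows "(\<integral>\<^sup>+ b. ennreal (\<Sum>i\<in>I. \<Sum>j\<in>J i. c i j * (if b = t i j then 1 else 0)) * g b \<partial>count_space UNIV)
         = (\<Sum>i\<in>I. \<Sum>j\<in>J i. ennreal (c i j) * g (t i j))"
proof -
  have "(\<integral>\<^sup>+ b. ennreal (\<Sum>i\<in>I. \<Sum>j\<in>J i. c i j * (if b = t i j then 1 else 0)) * g b \<partial>count_space UNIV)
      = (\<integral>\<^sup>+ b. (\<Sum>i\<in>I. ennreal (\<Sum>j\<in>J i. c i j * (if b = t i j then 1 else 0)) * g b) \<partial>count_space UNIV)"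
  proof (intro nn_integral_cong)
    fix b
    have "ennreal (\<Sum>i\<in>I. \<Sum>j\<in>J i. c i j * (if b = t i j then 1 else 0))
       = (\<Sum>i\<in>I. ennreal (\<Sum>j\<in>J i. c i j * (if b = t i j then 1 else 0)))"
      using assms by (intro sum_ennreal[symmetric] sum_nonneg) auto
    then show "ennreal (\<Sum>i\<in>I. \<Sum>j\<in>J i. c i j * (if b = t i j then 1 else 0)) * g b
       = (\<Sum>i\<in>I. ennreal (\<Sum>j\<in>J i. c i j * (if b = t i j then 1 else 0)) * g b)"
      by (simp add: sum_distrib_right)
  qed
  also have "\<dots> = (\<Sum>i\<in>I. \<integral>\<^sup>+ b. ennreal (\<Sum>j\<in>J i. c i j * (if b = t i j then 1 else 0)) * g b \<partial>count_space UNIV)"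
    by (rule nn_integral_sum) auto
  also have "\<dots> = (\<Sum>i\<in>I. \<Sum>j\<in>J i. ennreal (c i j) * g (t i j))"
    using assms by (intro sum.cong refl nn_point) auto
  finally show ?thesis .
qed

lemma prob_eq_pmf_map: "measure_pmf.prob p {y. b = h y} = pmf (map_pmf h p) b"
  by (simp add: pmf_map vimage_def eq_commute)

lemma nn_pmf:
  assumes "c \<ge> 0"
  shows "(\<integral>\<^sup>+ b. ennreal (c * measure_pmf.prob p {y. b = h y}) * g b \<partial>count_space UNIV)
       = ennreal c * (\<integral>\<^sup>+ y. g (h y) \<partial>p)"
proof -
  have "(\<integral>\<^sup>+ b. ennreal (c * measure_pmf.prob p {y. b = h y}) * g b \<partial>count_space UNIV)
     = (\<integral>\<^sup>+ b. ennreal c * (ennreal (pmf (map_pmf h p) b) * g b) \<partial>count_space UNIV)"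
    using assms by (intro nn_integral_cong) (simp add: prob_eq_pmf_map ennreal_mult mult.assoc)
  also have "\<dots> = ennreal c * (\<integral>\<^sup>+ b. ennreal (pmf (map_pmf h p) b) * g b \<partial>count_space UNIV)"
    by (rule nn_integral_cmult) simp
  also have "\<dots> = ennreal c * (\<integral>\<^sup>+ y. g (h y) \<partial>p)"
    by (simp add: nn_integral_measure_pmf[symmetric])
  finally show ?thesis .
qed

lemma nn_pmf_sum:
  assumes "finite I" "\<And>i. i \<in> I \<Longrightarrow> c i \<ge> 0"
  shows "(\<integral>\<^sup>+ b. ennreal (\<Sum>i\<in>I. c i * measure_pmf.prob (p i) {y. b = h i y}) * g b \<partial>count_space UNIV)
       = (\<Sum>i\<in>I. ennreal (c i) * (\<integral>\<^sup>+ y. g (h i y) \<partial>p i))"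
proof -
  have "(\<integral>\<^sup>+ b. ennreal (\<Sum>i\<in>I. c i * measure_pmf.prob (p i) {y. b = h i y}) * g b \<partial>count_space UNIV)
      = (\<integral>\<^sup>+ b. (\<Sum>i\<in>I. ennreal (c i * measure_pmf.prob (p i) {y. b = h i y}) * g b) \<partial>count_space UNIV)"
  proof (intro nn_integral_cong)
    fix b
    have "ennreal (\<Sum>i\<in>I. c i * measure_pmf.prob (p i) {y. b = h i y})
       = (\<Sum>i\<in>I. ennreal (c i * measure_pmf.prob (p i) {y. b = h i y}))"
      using assms by (intro sum_ennreal[symmetric]) auto
    then show "ennreal (\<Sum>i\<in>I. c i * measure_pmf.prob (p i) {y. b = h i y}) * g b
       = (\<Sum>i\<in>I. ennreal (c i * measure_pmf.prob (p i) {y. b = h i y}) * g b)"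
      by (simp add: sum_distrib_right)
  qed
  also have "\<dots> = (\<Sum>i\<in>I. \<integral>\<^sup>+ b. ennreal (c i * measure_pmf.prob (p i) {y. b = h i y}) * g b \<partial>count_space UNIV)"
    by (rule nn_integral_sum) auto
  also have "\<dots> = (\<Sum>i\<in>I. ennreal (c i) * (\<integral>\<^sup>+ y. g (h i y) \<partial>p i))"
    using assms by (intro sum.cong refl nn_pmf) auto
  finally show ?thesis .
qed



lemma ma_rate_nonneg: "\<kappa> r \<ge> 0 \<Longrightarrow> 0 \<le> ma_rate \<kappa> r x"
  unfolding ma_rate_def by (intro mult_nonneg_nonneg prod_nonneg) auto

lemma comp_decomp:
  assumes R: "finite R" and \<kappa>: "\<forall>r\<in>R. \<kappa> r \<ge> 0"
    and kI: "kI \<ge> 0" and kE: "kE \<ge> 0" and kF: "kF \<ge> 0" and kC: "kC \<ge> 0"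
  shows "(\<integral>\<^sup>+ b. ennreal (comp_rate R \<kappa> s kI kE kF kC \<mu> \<psi> n b) * g b \<partial>count_space UNIV) =
   (\<Sum>x\<in>set_mset n. \<Sum>r\<in>R. ennreal (real (count n x) * ma_rate \<kappa> r x) * g (n - {#x#} + {#react r x#}))
 + ennreal kI * (\<integral>\<^sup>+ x. g (n + {#x#}) \<partial>\<mu>)
 + (\<Sum>x\<in>set_mset n. ennreal (kE * real (count n x)) * g (n - {#x#}))
 + (\<Sum>x\<in>set_mset n. ennreal (kF * real (x s) * real (count n x)) * (\<integral>\<^sup>+ y. g (n - {#x#} + {#y#} + {#(\<lambda>j. x j - y j)#}) \<partial>\<psi> x))
 + (\<Sum>x\<in>set_mset n. ennreal (kC * real (count n x choose 2)) * g (n - {#x, x#} + {#(\<lambda>j. x j + x j)#}))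
 + (\<Sum>x\<in>set_mset n. \<Sum>y\<in>set_mset n - {x}. ennreal (kC * real (count n x) * real (count n y) / 2) * g (n - {#x, y#} + {#(\<lambda>j. x j + y j)#}))"
proof -
  define A1 where "A1 b = (\<Sum>x\<in>set_mset n. \<Sum>r\<in>R. real (count n x) * ma_rate \<kappa> r x *
         (if b = n - {#x#} + {#react r x#} then 1 else 0))" for b
  define A2 where "A2 b = kI * measure_pmf.prob \<mu> {x. b = n + {#x#}}" for b
  define A3 where "A3 b = (\<Sum>x\<in>set_mset n. kE * real (count n x) * (if b = n - {#x#} then 1 else 0))" for b
  define A4 where "A4 b = (\<Sum>x\<in>set_mset n. kF * real (x s) * real (count n x) *
         measure_pmf.prob (\<psi> x) {y. b = n - {#x#} + {#y#} + {#(\<lambda>j. x j - y j)#}})" for b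
  define A5 where "A5 b = (\<Sum>x\<in>set_mset n. kC * real (count n x choose 2) *
         (if b = n - {#x, x#} + {#(\<lambda>j. x j + x j)#} then 1 else 0))" for b
  define A6 where "A6 b = (\<Sum>x\<in>set_mset n. \<Sum>y\<in>set_mset n - {x}. kC * real (count n x) * real (count n y) / 2 *
         (if b = n - {#x, y#} + {#(\<lambda>j. x j + y j)#} then 1 else 0))" for b
  have cr: "comp_rate R \<kappa> s kI kE kF kC \<mu> \<psi> n b = A1 b + A2 b + A3 b + A4 b + A5 b + A6 b" for b
    unfolding comp_rate_def A1_def A2_def A3_def A4_def A5_def A6_def by simp
  have n1: "A1 b \<ge> 0" for b unfolding A1_def using \<kappa>
    by (intro sum_nonneg mult_nonneg_nonneg ma_rate_nonneg) auto
  have n2: "A2 b \<ge> 0" for b unfolding A2_def using kI by simp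
  have n3: "A3 b \<ge> 0" for b unfolding A3_def using kE by (intro sum_nonneg) auto
  have n4: "A4 b \<ge> 0" for b unfolding A4_def using kF by (intro sum_nonneg) auto
  have n5: "A5 b \<ge> 0" for b unfolding A5_def using kC by (intro sum_nonneg) auto
  have n6: "A6 b \<ge> 0" for b unfolding A6_def using kC by (intro sum_nonneg) auto
  have "(\<integral>\<^sup>+ b. ennreal (comp_rate R \<kappa> s kI kE kF kC \<mu> \<psi> n b) * g b \<partial>count_space UNIV)
     = (\<integral>\<^sup>+ b. ennreal (A1 b) * g b + ennreal (A2 b) * g b + ennreal (A3 b) * g b + ennreal (A4 b) * g b
          + ennreal (A5 b) * g b + ennreal (A6 b) * g b \<partial>count_space UNIV)"
    using n1 n2 n3 n4 n5 n6 by (intro nn_integral_cong) (simp add: cr distrib_right add_nonneg_nonneg)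
  also have "\<dots> = (\<integral>\<^sup>+ b. ennreal (A1 b) * g b \<partial>count_space UNIV) + (\<integral>\<^sup>+ b. ennreal (A2 b) * g b \<partial>count_space UNIV)
     + (\<integral>\<^sup>+ b. ennreal (A3 b) * g b \<partial>count_space UNIV) + (\<integral>\<^sup>+ b. ennreal (A4 b) * g b \<partial>count_space UNIV)
     + (\<integral>\<^sup>+ b. ennreal (A5 b) * g b \<partial>count_space UNIV) + (\<integral>\<^sup>+ b. ennreal (A6 b) * g b \<partial>count_space UNIV)"
    by (simp add: nn_integral_add)
  also have "(\<integral>\<^sup>+ b. ennreal (A1 b) * g b \<partial>count_space UNIV) =
     (\<Sum>x\<in>set_mset n. \<Sum>r\<in>R. ennreal (real (count n x) * ma_rate \<kappa> r x) * g (n - {#x#} + {#react r x#}))"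
    unfolding A1_def using R \<kappa> by (intro nn_point2) (auto intro!: mult_nonneg_nonneg ma_rate_nonneg)
  also have "(\<integral>\<^sup>+ b. ennreal (A2 b) * g b \<partial>count_space UNIV) = ennreal kI * (\<integral>\<^sup>+ x. g (n + {#x#}) \<partial>\<mu>)"
    unfolding A2_def using kI by (rule nn_pmf)
  also have "(\<integral>\<^sup>+ b. ennreal (A3 b) * g b \<partial>count_space UNIV) = (\<Sum>x\<in>set_mset n. ennreal (kE * real (count n x)) * g (n - {#x#}))"
    unfolding A3_def using kE by (intro nn_point) auto
  also have "(\<integral>\<^sup>+ b. ennreal (A4 b) * g b \<partial>count_space UNIV) =
      (\<Sum>x\<in>set_mset n. ennreal (kF * real (x s) * real (count n x)) * (\<integral>\<^sup>+ y. g (n - {#x#} + {#y#} + {#(\<lambda>j. x j - y j)#}) \<partial>\<psi> x))"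
    unfolding A4_def using kF by (intro nn_pmf_sum) auto
  also have "(\<integral>\<^sup>+ b. ennreal (A5 b) * g b \<partial>count_space UNIV) =
      (\<Sum>x\<in>set_mset n. ennreal (kC * real (count n x choose 2)) * g (n - {#x, x#} + {#(\<lambda>j. x j + x j)#}))"
    unfolding A5_def using kC by (intro nn_point) auto
  also have "(\<integral>\<^sup>+ b. ennreal (A6 b) * g b \<partial>count_space UNIV) =
      (\<Sum>x\<in>set_mset n. \<Sum>y\<in>set_mset n - {x}. ennreal (kC * real (count n x) * real (count n y) / 2) * g (n - {#x, y#} + {#(\<lambda>j. x j + y j)#}))"
    unfolding A6_def using kC by (intro nn_point2) auto
  finally show ?thesis .
qed



lemma pmf_integrable_bdd:
  fixes f :: "'a \<Rightarrow> real" and B :: real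
  assumes "\<And>y. 0 \<le> f y" "\<And>y. f y \<le> B"
  shows "integrable (measure_pmf p) f"
proof (rule measure_pmf.integrable_const_bound[where B=B])
  show "AE x in measure_pmf p. norm (f x) \<le> B"
    by (intro AE_I2) (simp add: assms abs_of_nonneg)
qed simp

lemma nn_pmf_real:
  fixes f :: "'a \<Rightarrow> real" and B :: real and p :: "'a pmf"
  assumes "\<And>y. 0 \<le> f y" "\<And>y. f y \<le> B"
  shows "(\<integral>\<^sup>+ y. ennreal (f y) \<partial>p) = ennreal (\<integral> y. f y \<partial>p)"
proof -
  have "integrable p f" by (rule pmf_integrable_bdd[OF assms])
  then show ?thesis by (intro nn_integral_eq_integral) (auto simp: assms)
qed

lemma ennreal_plus6:
  fixes a b c d e f :: real
  assumes "0 \<le> a" "0 \<le> b" "0 \<le> c" "0 \<le> d" "0 \<le> e" "0 \<le> f"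
  shows "ennreal (a + b + c + d + e + f) = ennreal a + ennreal b + ennreal c + ennreal d + ennreal e + ennreal f"
  using assms by simp

definition TR :: "(('i \<Rightarrow> nat) \<times> ('i \<Rightarrow> nat)) set \<Rightarrow> (('i \<Rightarrow> nat) \<times> ('i \<Rightarrow> nat) \<Rightarrow> real) \<Rightarrow> 'i
   \<Rightarrow> real \<Rightarrow> real \<Rightarrow> real \<Rightarrow> real \<Rightarrow> ('i::finite \<Rightarrow> nat) pmf \<Rightarrow> (('i \<Rightarrow> nat) \<Rightarrow> ('i \<Rightarrow> nat) pmf)
   \<Rightarrow> ('i \<Rightarrow> nat) multiset \<Rightarrow> (('i \<Rightarrow> nat) multiset \<Rightarrow> real) \<Rightarrow> real" where
  "TR R \<kappa> s kI kE kF kC \<mu> \<psi> n g =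
   (\<Sum>x\<in>set_mset n. \<Sum>r\<in>R. (real (count n x) * ma_rate \<kappa> r x) * g (n - {#x#} + {#react r x#}))
 + kI * (\<integral> x. g (n + {#x#}) \<partial>\<mu>)
 + (\<Sum>x\<in>set_mset n. (kE * real (count n x)) * g (n - {#x#}))
 + (\<Sum>x\<in>set_mset n. (kF * real (x s) * real (count n x)) * (\<integral> y. g (n - {#x#} + {#y#} + {#(\<lambda>j. x j - y j)#}) \<partial>\<psi> x))
 + (\<Sum>x\<in>set_mset n. (kC * real (count n x choose 2)) * g (n - {#x, x#} + {#(\<lambda>j. x j + x j)#}))
 + (\<Sum>x\<in>set_mset n. \<Sum>y\<in>set_mset n - {x}. (kC * real (count n x) * real (count n y) / 2) * g (n - {#x, y#} + {#(\<lambda>j. x j + y j)#}))"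

lemma sum_ennreal_mult:
  assumes "\<And>i. i \<in> I \<Longrightarrow> 0 \<le> a i" "\<And>i. i \<in> I \<Longrightarrow> 0 \<le> b i"
  shows "(\<Sum>i\<in>I. ennreal (a i) * ennreal (b i)) = ennreal (\<Sum>i\<in>I. a i * b i)"
proof -
  have "(\<Sum>i\<in>I. ennreal (a i) * ennreal (b i)) = (\<Sum>i\<in>I. ennreal (a i * b i))"
    using assms by (intro sum.cong refl) (simp add: ennreal_mult'')
  also have "\<dots> = ennreal (\<Sum>i\<in>I. a i * b i)"
    using assms by (intro sum_ennreal) auto
  finally show ?thesis .
qed

lemma sum_ennreal_mult2:
  assumes "\<And>i j. i \<in> I \<Longrightarrow> j \<in> J i \<Longrightarrow> 0 \<le> a i j" "\<And>i j. i \<in> I \<Longrightarrow> j \<in> J i \<Longrightarrow> 0 \<le> b i j"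
  shows "(\<Sum>i\<in>I. \<Sum>j\<in>J i. ennreal (a i j) * ennreal (b i j)) = ennreal (\<Sum>i\<in>I. \<Sum>j\<in>J i. a i j * b i j)"
proof -
  have "(\<Sum>i\<in>I. \<Sum>j\<in>J i. ennreal (a i j) * ennreal (b i j)) = (\<Sum>i\<in>I. ennreal (\<Sum>j\<in>J i. a i j * b i j))"
    using assms by (intro sum.cong refl sum_ennreal_mult) auto
  also have "\<dots> = ennreal (\<Sum>i\<in>I. \<Sum>j\<in>J i. a i j * b i j)"
    using assms by (intro sum_ennreal sum_nonneg mult_nonneg_nonneg) auto
  finally show ?thesis .
qed

lemma comp_decomp_real:
  assumes R: "finite R" and \<kappa>: "\<forall>r\<in>R. \<kappa> r \<ge> 0"
    and kI: "kI \<ge> 0" and kE: "kE \<ge> 0" and kF: "kF \<ge> 0" and kC: "kC \<ge> 0"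
    and g0: "\<And>b. 0 \<le> g b" and gB: "\<And>b. g b \<le> B"
  shows "(\<integral>\<^sup>+ b. ennreal (comp_rate R \<kappa> s kI kE kF kC \<mu> \<psi> n b) * ennreal (g b) \<partial>count_space UNIV)
       = ennreal (TR R \<kappa> s kI kE kF kC \<mu> \<psi> n g)"
proof -
  have i1: "(\<integral>\<^sup>+ x. ennreal (g (n + {#x#})) \<partial>\<mu>) = ennreal (\<integral> x. g (n + {#x#}) \<partial>\<mu>)"
    using g0 gB by (intro nn_pmf_real) auto
  have i2: "(\<integral>\<^sup>+ y. ennreal (g (n - {#x#} + {#y#} + {#(\<lambda>j. x j - y j)#})) \<partial>\<psi> x)
      = ennreal (\<integral> y. g (n - {#x#} + {#y#} + {#(\<lambda>j. x j - y j)#}) \<partial>\<psi> x)" for x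
    using g0 gB by (intro nn_pmf_real) auto
  have I0: "0 \<le> (\<integral> x. g (n + {#x#}) \<partial>\<mu>)" using g0 by simp
  have I0': "0 \<le> (\<integral> y. g (n - {#x#} + {#y#} + {#(\<lambda>j. x j - y j)#}) \<partial>\<psi> x)" for x using g0 by simp
  have t1: "(\<Sum>x\<in>set_mset n. \<Sum>r\<in>R. ennreal (real (count n x) * ma_rate \<kappa> r x) * ennreal (g (n - {#x#} + {#react r x#})))
     = ennreal (\<Sum>x\<in>set_mset n. \<Sum>r\<in>R. (real (count n x) * ma_rate \<kappa> r x) * g (n - {#x#} + {#react r x#}))"
    using \<kappa> g0 by (intro sum_ennreal_mult2) (auto intro!: mult_nonneg_nonneg ma_rate_nonneg)
  have t2: "ennreal kI * (\<integral>\<^sup>+ x. ennreal (g (n + {#x#})) \<partial>\<mu>) = ennreal (kI * (\<integral> x. g (n + {#x#}) \<partial>\<mu>))"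
    using i1 I0 by (simp add: ennreal_mult'')
  have t3: "(\<Sum>x\<in>set_mset n. ennreal (kE * real (count n x)) * ennreal (g (n - {#x#})))
     = ennreal (\<Sum>x\<in>set_mset n. (kE * real (count n x)) * g (n - {#x#}))"
    using kE g0 by (intro sum_ennreal_mult) auto
  have t4: "(\<Sum>x\<in>set_mset n. ennreal (kF * real (x s) * real (count n x)) * (\<integral>\<^sup>+ y. ennreal (g (n - {#x#} + {#y#} + {#(\<lambda>j. x j - y j)#})) \<partial>\<psi> x))
     = ennreal (\<Sum>x\<in>set_mset n. (kF * real (x s) * real (count n x)) * (\<integral> y. g (n - {#x#} + {#y#} + {#(\<lambda>j. x j - y j)#}) \<partial>\<psi> x))"
    unfolding i2 using kF I0' by (intro sum_ennreal_mult) auto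
  have t5: "(\<Sum>x\<in>set_mset n. ennreal (kC * real (count n x choose 2)) * ennreal (g (n - {#x, x#} + {#(\<lambda>j. x j + x j)#})))
     = ennreal (\<Sum>x\<in>set_mset n. (kC * real (count n x choose 2)) * g (n - {#x, x#} + {#(\<lambda>j. x j + x j)#}))"
    using kC g0 by (intro sum_ennreal_mult) auto
  have t6: "(\<Sum>x\<in>set_mset n. \<Sum>y\<in>set_mset n - {x}. ennreal (kC * real (count n x) * real (count n y) / 2) * ennreal (g (n - {#x, y#} + {#(\<lambda>j. x j + y j)#})))
     = ennreal (\<Sum>x\<in>set_mset n. \<Sum>y\<in>set_mset n - {x}. (kC * real (count n x) * real (count n y) / 2) * g (n - {#x, y#} + {#(\<lambda>j. x j + y j)#}))"
    using kC g0 by (intro sum_ennreal_mult2) auto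
  have nn: "0 \<le> (\<Sum>x\<in>set_mset n. \<Sum>r\<in>R. (real (count n x) * ma_rate \<kappa> r x) * g (n - {#x#} + {#react r x#}))"
           "0 \<le> kI * (\<integral> x. g (n + {#x#}) \<partial>\<mu>)"
           "0 \<le> (\<Sum>x\<in>set_mset n. (kE * real (count n x)) * g (n - {#x#}))"
           "0 \<le> (\<Sum>x\<in>set_mset n. (kF * real (x s) * real (count n x)) * (\<integral> y. g (n - {#x#} + {#y#} + {#(\<lambda>j. x j - y j)#}) \<partial>\<psi> x))"
           "0 \<le> (\<Sum>x\<in>set_mset n. (kC * real (count n x choose 2)) * g (n - {#x, x#} + {#(\<lambda>j. x j + x j)#}))"
           "0 \<le> (\<Sum>x\<in>set_mset n. \<Sum>y\<in>set_mset n - {x}. (kC * real (count n x) * real (count n y) / 2) * g (n - {#x, y#} + {#(\<lambda>j. x j + y j)#}))"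
    using \<kappa> g0 kI kE kF kC I0 I0'
    by (auto intro!: sum_nonneg mult_nonneg_nonneg ma_rate_nonneg)
  show ?thesis
    unfolding comp_decomp[OF R \<kappa> kI kE kF kC] t1 t2 t3 t4 t5 t6 TR_def
    by (rule ennreal_plus6[OF nn, symmetric])
qed



definition fv :: "('i::finite \<Rightarrow> real) \<Rightarrow> ('i \<Rightarrow> nat) \<Rightarrow> real" where
  "fv w z = (\<Sum>j\<in>UNIV. w j * real (z j))"

definition GG :: "('i::finite \<Rightarrow> real) \<Rightarrow> ('i \<Rightarrow> nat) multiset \<Rightarrow> real" where
  "GG w n = sum_mset (image_mset (\<lambda>x. fv w x + 1) n)"

lemma fv_nonneg: "(\<And>j. w j > 0) \<Longrightarrow> fv w x \<ge> 0"
  unfolding fv_def by (intro sum_nonneg) (simp add: less_imp_le)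

lemma fv_plus: "fv w (\<lambda>j. x j + y j) = fv w x + fv w y"
  unfolding fv_def by (simp add: algebra_simps sum.distrib)

lemma fv_minus: "(\<And>j. y j \<le> x j) \<Longrightarrow> fv w y + fv w (\<lambda>j. x j - y j) = fv w x"
  unfolding fv_def by (simp add: of_nat_diff algebra_simps sum.distrib[symmetric])

lemma fv_single: "(\<And>j. w j > 0) \<Longrightarrow> w s * real (x s) \<le> fv w x"
  unfolding fv_def
  by (rule member_le_sum[where f = "\<lambda>j. w j * real (x j)"]) (auto simp: less_imp_le)

lemma GG_add: "GG w (add_mset z n) = GG w n + (fv w z + 1)"
  unfolding GG_def by simp

lemma GG_plus: "GG w (n + m) = GG w n + GG w m"
  unfolding GG_def by simp

lemma GG_minus1: "x \<in># n \<Longrightarrow> GG w (n - {#x#}) = GG w n - (fv w x + 1)"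
proof -
  assume "x \<in># n"
  then have "n = add_mset x (n - {#x#})" by simp
  then have "GG w n = GG w (n - {#x#}) + (fv w x + 1)" by (metis GG_add)
  then show ?thesis by simp
qed

lemma GG_minus2: "{#x, y#} \<subseteq># n \<Longrightarrow> GG w (n - {#x, y#}) = GG w n - (fv w x + 1) - (fv w y + 1)"
proof -
  assume a: "{#x, y#} \<subseteq># n"
  have "n = (n - {#x, y#}) + {#x, y#}" by (rule subset_mset.diff_add[symmetric, OF a])
  then have "GG w n = GG w (n - {#x, y#}) + GG w {#x, y#}" by (metis GG_plus)
  moreover have "GG w {#x, y#} = (fv w x + 1) + (fv w y + 1)" unfolding GG_def by simp
  ultimately show ?thesis by simp
qed

lemma GG_set: "GG w n = (\<Sum>x\<in>set_mset n. real (count n x) * (fv w x + 1))"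
proof (induction n)
  case empty then show ?case by (simp add: GG_def)
next
  case (add a n)
  show ?case
  proof (cases "a \<in># n")
    case True
    have "(\<Sum>x\<in>set_mset (add_mset a n). real (count (add_mset a n) x) * (fv w x + 1))
       = (\<Sum>x\<in>set_mset n. real (count n x) * (fv w x + 1) + (if x = a then fv w x + 1 else 0))"
      using True by (intro sum.cong) (auto simp: insert_absorb algebra_simps)
    also have "\<dots> = GG w n + (fv w a + 1)"
      using True by (simp add: sum.distrib add.IH)
    finally show ?thesis by (simp add: GG_add)
  next
    case False
    have "(\<Sum>x\<in>set_mset (add_mset a n). real (count (add_mset a n) x) * (fv w x + 1))
       = real (count (add_mset a n) a) * (fv w a + 1) + (\<Sum>x\<in>set_mset n. real (count (add_mset a n) x) * (fv w x + 1))"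
      using False by simp
    also have "(\<Sum>x\<in>set_mset n. real (count (add_mset a n) x) * (fv w x + 1)) = GG w n"
      unfolding add.IH using False by (intro sum.cong) auto
    finally show ?thesis using False by (simp add: GG_add not_in_iff)
  qed
qed

lemma GG_nonneg: "(\<And>j. w j > 0) \<Longrightarrow> GG w n \<ge> 0"
  unfolding GG_set using fv_nonneg[of w]
  by (intro sum_nonneg mult_nonneg_nonneg) (auto simp: add_nonneg_nonneg)



lemma drift_real:
  fixes R :: "(('i::finite \<Rightarrow> nat) \<times> ('i \<Rightarrow> nat)) set"
    and \<mu> :: "('i \<Rightarrow> nat) pmf" and \<psi> :: "('i \<Rightarrow> nat) \<Rightarrow> ('i \<Rightarrow> nat) pmf"
  assumes R: "finite R" and \<kappa>: "\<forall>r\<in>R. \<kappa> r \<ge> 0"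
    and kI: "kI \<ge> 0" and kE: "kE \<ge> 0" and kF: "kF \<ge> 0" and kC: "kC \<ge> 0"
    and psi: "\<forall>x. set_pmf (\<psi> x) \<subseteq> {y. \<forall>j. y j \<le> x j}"
    and w: "\<And>j. w j > 0" and c: "c > 0" and c': "c' > 0"
    and chem: "\<And>x. chem_gen R \<kappa> (fv w) x \<le> c * fv w x + c'"
    and K: "K > 0" and nK: "GG w n < K"
  shows "TR R \<kappa> s kI kE kF kC \<mu> \<psi> n (\<lambda>b. min (GG w b) K)
     \<le> TR R \<kappa> s kI kE kF kC \<mu> \<psi> n (\<lambda>b. GG w n) + (max c c' + kF / w s) * GG w n
        + kI * (\<integral> x. min (fv w x + 1) K \<partial>\<mu>)"
proof -
  define V where "V = (\<lambda>b. min (GG w b) K)"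
  define G where "G = GG w n"
  have G0: "G \<ge> 0" unfolding G_def by (rule GG_nonneg[OF w])
  have VG: "V b \<le> GG w b" for b unfolding V_def by simp
  have V0: "0 \<le> V b" for b unfolding V_def using GG_nonneg[OF w] K by simp
  have VK: "V b \<le> K" for b unfolding V_def by simp
  have fv0: "fv w x \<ge> 0" for x by (rule fv_nonneg[OF w])
  have h1: "(\<Sum>x\<in>set_mset n. \<Sum>r\<in>R. (real (count n x) * ma_rate \<kappa> r x) * V (n - {#x#} + {#react r x#}))
     \<le> (\<Sum>x\<in>set_mset n. \<Sum>r\<in>R. (real (count n x) * ma_rate \<kappa> r x) * G)
       + (\<Sum>x\<in>set_mset n. real (count n x) * (c * fv w x + c'))"
    unfolding sum.distrib[symmetric]
  proof (intro sum_mono)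
    fix x assume x: "x \<in> set_mset n"
    have "(\<Sum>r\<in>R. (real (count n x) * ma_rate \<kappa> r x) * V (n - {#x#} + {#react r x#}))
        \<le> (\<Sum>r\<in>R. (real (count n x) * ma_rate \<kappa> r x) * (G + (fv w (react r x) - fv w x)))"
    proof (intro sum_mono mult_left_mono)
      fix r assume "r \<in> R"
      then show "0 \<le> real (count n x) * ma_rate \<kappa> r x" using \<kappa> by (simp add: ma_rate_nonneg)
      have "V (n - {#x#} + {#react r x#}) \<le> GG w (n - {#x#} + {#react r x#})" by (rule VG)
      also have "\<dots> = G + (fv w (react r x) - fv w x)"
        using x by (simp add: GG_add GG_minus1 G_def)
      finally show "V (n - {#x#} + {#react r x#}) \<le> G + (fv w (react r x) - fv w x)" .
    qed
    also have "\<dots> = (\<Sum>r\<in>R. (real (count n x) * ma_rate \<kappa> r x) * G) + real (count n x) * chem_gen R \<kappa> (fv w) x"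
    proof -
      have e1: "(\<Sum>r\<in>R. (real (count n x) * ma_rate \<kappa> r x) * (G + (fv w (react r x) - fv w x)))
         = (\<Sum>r\<in>R. (real (count n x) * ma_rate \<kappa> r x) * G) + (\<Sum>r\<in>R. (real (count n x) * ma_rate \<kappa> r x) * (fv w (react r x) - fv w x))"
        by (simp add: distrib_left sum.distrib)
      have e2: "real (count n x) * chem_gen R \<kappa> (fv w) x = (\<Sum>r\<in>R. (real (count n x) * ma_rate \<kappa> r x) * (fv w (react r x) - fv w x))"
        unfolding chem_gen_def by (simp add: sum_distrib_left mult.assoc)
      show ?thesis unfolding e1 e2 ..
    qed
    also have "\<dots> \<le> (\<Sum>r\<in>R. (real (count n x) * ma_rate \<kappa> r x) * G) + real (count n x) * (c * fv w x + c')"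
      using chem[of x] by (simp add: mult_left_mono)
    finally show "(\<Sum>r\<in>R. (real (count n x) * ma_rate \<kappa> r x) * V (n - {#x#} + {#react r x#}))
        \<le> (\<Sum>r\<in>R. (real (count n x) * ma_rate \<kappa> r x) * G) + real (count n x) * (c * fv w x + c')" .
  qed
  have h2: "kI * (\<integral> x. V (n + {#x#}) \<partial>\<mu>) \<le> kI * (\<integral> x. G \<partial>\<mu>) + kI * (\<integral> x. min (fv w x + 1) K \<partial>\<mu>)"
  proof -
    have int1: "integrable (measure_pmf \<mu>) (\<lambda>x. V (n + {#x#}))"
      using V0 VK by (intro pmf_integrable_bdd) auto
    have int2: "integrable (measure_pmf \<mu>) (\<lambda>x. min (fv w x + 1) K)"
      using fv0 K by (intro pmf_integrable_bdd[where B = K]) (auto simp: add_nonneg_nonneg)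
    have "(\<integral> x. V (n + {#x#}) \<partial>\<mu>) \<le> (\<integral> x. G + min (fv w x + 1) K \<partial>\<mu>)"
    proof (intro integral_mono int1)
      show "integrable (measure_pmf \<mu>) (\<lambda>x. G + min (fv w x + 1) K)" using int2 by simp
      fix x
      have "V (n + {#x#}) = min (G + (fv w x + 1)) K" unfolding V_def G_def by (simp add: GG_add)
      also have "\<dots> \<le> G + min (fv w x + 1) K" using G0 by simp
      finally show "V (n + {#x#}) \<le> G + min (fv w x + 1) K" .
    qed
    also have "\<dots> = (\<integral> x. G \<partial>\<mu>) + (\<integral> x. min (fv w x + 1) K \<partial>\<mu>)"
      using Bochner_Integration.integral_add[of "measure_pmf \<mu>" "\<lambda>x. G" "\<lambda>x. min (fv w x + 1) K", OF _ int2] by simp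
    finally show ?thesis using kI by (simp add: mult_left_mono distrib_left[symmetric])
  qed
  have h3: "(\<Sum>x\<in>set_mset n. (kE * real (count n x)) * V (n - {#x#})) \<le> (\<Sum>x\<in>set_mset n. (kE * real (count n x)) * G)"
  proof (intro sum_mono mult_left_mono)
    fix x assume x: "x \<in> set_mset n"
    have "V (n - {#x#}) \<le> GG w (n - {#x#})" by (rule VG)
    also have "\<dots> \<le> G" using x fv0[of x] by (simp add: GG_minus1 G_def)
    finally show "V (n - {#x#}) \<le> G" .
  qed (use kE in simp)
  have h4: "(\<Sum>x\<in>set_mset n. (kF * real (x s) * real (count n x)) * (\<integral> y. V (n - {#x#} + {#y#} + {#(\<lambda>j. x j - y j)#}) \<partial>\<psi> x))
     \<le> (\<Sum>x\<in>set_mset n. (kF * real (x s) * real (count n x)) * (\<integral> y. G \<partial>\<psi> x)) + (\<Sum>x\<in>set_mset n. kF * real (x s) * real (count n x))"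
    unfolding sum.distrib[symmetric]
  proof (intro sum_mono)
    fix x assume x: "x \<in> set_mset n"
    have "(\<integral> y. V (n - {#x#} + {#y#} + {#(\<lambda>j. x j - y j)#}) \<partial>\<psi> x) \<le> (\<integral> y. G + 1 \<partial>\<psi> x)"
    proof (rule integral_mono_AE')
      show "integrable (measure_pmf (\<psi> x)) (\<lambda>y. G + 1)" by simp
      show "AE y in measure_pmf (\<psi> x). 0 \<le> G + 1" using G0 by simp
      show "AE y in measure_pmf (\<psi> x). V (n - {#x#} + {#y#} + {#(\<lambda>j. x j - y j)#}) \<le> G + 1"
        unfolding AE_measure_pmf_iff
      proof
        fix y assume "y \<in> set_pmf (\<psi> x)"
        then have yx: "\<And>j. y j \<le> x j" using psi by auto
        have "V (n - {#x#} + {#y#} + {#(\<lambda>j. x j - y j)#}) \<le> GG w (n - {#x#} + {#y#} + {#(\<lambda>j. x j - y j)#})" by (rule VG)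
        also have "\<dots> = G - (fv w x + 1) + (fv w y + 1) + (fv w (\<lambda>j. x j - y j) + 1)"
          using x by (simp add: GG_add GG_minus1 G_def)
        also have "\<dots> = G + 1" using fv_minus[of y x w, OF yx] by simp
        finally show "V (n - {#x#} + {#y#} + {#(\<lambda>j. x j - y j)#}) \<le> G + 1" .
      qed
    qed
    also have "\<dots> = (\<integral> y. G \<partial>\<psi> x) + 1" by simp
    finally have "(\<integral> y. V (n - {#x#} + {#y#} + {#(\<lambda>j. x j - y j)#}) \<partial>\<psi> x) \<le> (\<integral> y. G \<partial>\<psi> x) + 1" .
    then have "(kF * real (x s) * real (count n x)) * (\<integral> y. V (n - {#x#} + {#y#} + {#(\<lambda>j. x j - y j)#}) \<partial>\<psi> x)
        \<le> (kF * real (x s) * real (count n x)) * ((\<integral> y. G \<partial>\<psi> x) + 1)"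
      using kF by (intro mult_left_mono) auto
    then show "(kF * real (x s) * real (count n x)) * (\<integral> y. V (n - {#x#} + {#y#} + {#(\<lambda>j. x j - y j)#}) \<partial>\<psi> x)
        \<le> (kF * real (x s) * real (count n x)) * (\<integral> y. G \<partial>\<psi> x) + kF * real (x s) * real (count n x)"
      by (simp add: distrib_left)
  qed
  have h5: "(\<Sum>x\<in>set_mset n. (kC * real (count n x choose 2)) * V (n - {#x, x#} + {#(\<lambda>j. x j + x j)#}))
      \<le> (\<Sum>x\<in>set_mset n. (kC * real (count n x choose 2)) * G)"
  proof (intro sum_mono)
    fix x assume x: "x \<in> set_mset n"
    show "(kC * real (count n x choose 2)) * V (n - {#x, x#} + {#(\<lambda>j. x j + x j)#}) \<le> (kC * real (count n x choose 2)) * G"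
    proof (cases "count n x \<ge> 2")
      case True
      then have sub: "{#x, x#} \<subseteq># n" by (simp add: subseteq_mset_def)
      have "V (n - {#x, x#} + {#(\<lambda>j. x j + x j)#}) \<le> GG w (n - {#x, x#} + {#(\<lambda>j. x j + x j)#})" by (rule VG)
      also have "\<dots> = G - 1" using sub by (simp add: GG_add GG_minus2[OF sub] fv_plus G_def)
      finally show ?thesis using kC by (intro mult_left_mono) auto
    next
      case False
      then have "count n x choose 2 = 0" by (intro binomial_eq_0) simp
      then have "real (count n x choose 2) = 0" by (simp only: of_nat_0)
      then show ?thesis by (simp only: mult_zero_right mult_zero_left order_refl)
    qed
  qed
  have h6: "(\<Sum>x\<in>set_mset n. \<Sum>y\<in>set_mset n - {x}. (kC * real (count n x) * real (count n y) / 2) * V (n - {#x, y#} + {#(\<lambda>j. x j + y j)#}))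
      \<le> (\<Sum>x\<in>set_mset n. \<Sum>y\<in>set_mset n - {x}. (kC * real (count n x) * real (count n y) / 2) * G)"
  proof (intro sum_mono mult_left_mono)
    fix x y assume x: "x \<in> set_mset n" and y: "y \<in> set_mset n - {x}"
    then have sub: "{#x, y#} \<subseteq># n"
      by (auto simp: subseteq_mset_def)
    have "V (n - {#x, y#} + {#(\<lambda>j. x j + y j)#}) \<le> GG w (n - {#x, y#} + {#(\<lambda>j. x j + y j)#})" by (rule VG)
    also have "\<dots> = G - 1" using sub by (simp add: GG_add GG_minus2[OF sub] fv_plus G_def)
    finally show "V (n - {#x, y#} + {#(\<lambda>j. x j + y j)#}) \<le> G" by simp
  qed (use kC in simp)
  have h7: "(\<Sum>x\<in>set_mset n. real (count n x) * (c * fv w x + c')) + (\<Sum>x\<in>set_mset n. kF * real (x s) * real (count n x))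
      \<le> (max c c' + kF / w s) * G"
  proof -
    have "(\<Sum>x\<in>set_mset n. real (count n x) * (c * fv w x + c')) + (\<Sum>x\<in>set_mset n. kF * real (x s) * real (count n x))
       = (\<Sum>x\<in>set_mset n. real (count n x) * (c * fv w x + c' + kF * real (x s)))"
      by (simp add: sum.distrib[symmetric] algebra_simps)
    also have "\<dots> \<le> (\<Sum>x\<in>set_mset n. real (count n x) * ((max c c' + kF / w s) * (fv w x + 1)))"
    proof (intro sum_mono mult_left_mono)
      fix x
      have ws: "w s > 0" using w by simp
      have a: "c * fv w x + c' \<le> max c c' * (fv w x + 1)"
      proof -
        have "c * fv w x \<le> max c c' * fv w x" using fv0[of x] by (intro mult_right_mono) auto
        moreover have "c' \<le> max c c'" by simp
        ultimately show ?thesis by (simp add: distrib_left)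
      qed
      have "w s * real (x s) \<le> fv w x" by (rule fv_single[OF w])
      then have "real (x s) \<le> fv w x / w s" using ws by (simp add: field_simps)
      then have "kF * real (x s) \<le> kF * (fv w x / w s)" using kF by (intro mult_left_mono) auto
      also have "\<dots> \<le> kF / w s * (fv w x + 1)" using kF ws by (simp add: field_simps)
      finally have b: "kF * real (x s) \<le> kF / w s * (fv w x + 1)" .
      show "c * fv w x + c' + kF * real (x s) \<le> (max c c' + kF / w s) * (fv w x + 1)"
        using a b by (simp add: distrib_right)
    qed simp
    also have "\<dots> = (max c c' + kF / w s) * G"
      unfolding G_def GG_set by (simp add: sum_distrib_left algebra_simps)
    finally show ?thesis .
  qed
  have ic: "(\<integral> x. G \<partial>\<mu>) = G" "\<And>x. (\<integral> y. G \<partial>\<psi> x) = G" by simp_all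
  show ?thesis
    unfolding TR_def V_def[symmetric] G_def[symmetric]
    using h1 h2 h3 h4 h5 h6 h7 unfolding ic by linarith
qed



lemma cr_nonneg:
  assumes \<kappa>: "\<forall>r\<in>R. \<kappa> r \<ge> 0"
    and kI: "kI \<ge> 0" and kE: "kE \<ge> 0" and kF: "kF \<ge> 0" and kC: "kC \<ge> 0"
  shows "0 \<le> comp_rate R \<kappa> s kI kE kF kC \<mu> \<psi> n m"
  unfolding comp_rate_def using assms
  by (intro add_nonneg_nonneg sum_nonneg mult_nonneg_nonneg ma_rate_nonneg) auto

lemma split_self:
  fixes Q :: "'s \<Rightarrow> 's \<Rightarrow> real"
  assumes "\<And>b. Q a b \<ge> 0"
  shows "(\<integral>\<^sup>+ b. ennreal (Q a b) * g b \<partial>count_space UNIV)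
       = (\<integral>\<^sup>+ b. ennreal (jump_rate Q a b) * g b \<partial>count_space UNIV) + ennreal (Q a a) * g a"
proof -
  have "(\<integral>\<^sup>+ b. ennreal (Q a b) * g b \<partial>count_space UNIV)
      = (\<integral>\<^sup>+ b. ennreal (jump_rate Q a b) * g b + (ennreal (Q a a) * g a) * indicator {a} b \<partial>count_space UNIV)"
    by (intro nn_integral_cong) (auto simp: jump_rate_def split: split_indicator)
  also have "\<dots> = (\<integral>\<^sup>+ b. ennreal (jump_rate Q a b) * g b \<partial>count_space UNIV)
      + (\<integral>\<^sup>+ b. (ennreal (Q a a) * g a) * indicator {a} b \<partial>count_space UNIV)"
    by (rule nn_integral_add) auto
  also have "(\<integral>\<^sup>+ b. (ennreal (Q a a) * g a) * indicator {a} b \<partial>count_space UNIV) = ennreal (Q a a) * g a"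
    by (simp add: nn_integral_cmult_indicator)
  finally show ?thesis .
qed

lemma jr_le_cr:
  fixes Q :: "'s \<Rightarrow> 's \<Rightarrow> real"
  assumes "\<And>b. Q a b \<ge> 0"
  shows "total_rate Q a \<le> (\<integral>\<^sup>+ b. ennreal (Q a b) * ennreal 1 \<partial>count_space UNIV)"
  unfolding total_rate_def
  by (intro nn_integral_mono) (simp add: jump_rate_def assms)

lemma total_fin:
  assumes R: "finite R" and \<kappa>: "\<forall>r\<in>R. \<kappa> r \<ge> 0"
    and kI: "kI \<ge> 0" and kE: "kE \<ge> 0" and kF: "kF \<ge> 0" and kC: "kC \<ge> 0"
  shows "total_rate (comp_rate R \<kappa> s kI kE kF kC \<mu> \<psi>) n \<noteq> \<top>"
proof -
  have "total_rate (comp_rate R \<kappa> s kI kE kF kC \<mu> \<psi>) n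
     \<le> (\<integral>\<^sup>+ b. ennreal (comp_rate R \<kappa> s kI kE kF kC \<mu> \<psi> n b) * ennreal 1 \<partial>count_space UNIV)"
    by (rule jr_le_cr) (rule cr_nonneg[OF \<kappa> kI kE kF kC])
  also have "\<dots> = ennreal (TR R \<kappa> s kI kE kF kC \<mu> \<psi> n (\<lambda>_. 1))"
    by (rule comp_decomp_real[OF R \<kappa> kI kE kF kC, where B = 1]) auto
  finally show ?thesis by (rule neq_top_trans[OF ennreal_neq_top])
qed



lemma ennreal_le_plus_real:
  fixes x y z :: real
  assumes "x \<le> y + z" "0 \<le> z"
  shows "ennreal x \<le> ennreal y + ennreal z"
proof (cases "y \<ge> 0")
  case True
  then have "ennreal x \<le> ennreal (y + z)" using assms by (intro ennreal_leI) auto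
  also have "\<dots> = ennreal y + ennreal z" using True assms by simp
  finally show ?thesis .
next
  case False
  then have "ennreal x \<le> ennreal z" using assms by (intro ennreal_leI) auto
  also have "\<dots> \<le> ennreal y + ennreal z" by simp
  finally show ?thesis .
qed

lemma drift_lyap:
  fixes R :: "(('i::finite \<Rightarrow> nat) \<times> ('i \<Rightarrow> nat)) set"
    and \<mu> :: "('i \<Rightarrow> nat) pmf" and \<psi> :: "('i \<Rightarrow> nat) \<Rightarrow> ('i \<Rightarrow> nat) pmf"
  assumes R: "finite R" and \<kappa>: "\<forall>r\<in>R. \<kappa> r \<ge> 0"
    and kI: "kI \<ge> 0" and kE: "kE \<ge> 0" and kF: "kF \<ge> 0" and kC: "kC \<ge> 0"
    and psi: "\<forall>x. set_pmf (\<psi> x) \<subseteq> {y. \<forall>j. y j \<le> x j}"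
    and w: "\<And>j. w j > 0" and c: "c > 0" and c': "c' > 0"
    and chem: "\<And>x. chem_gen R \<kappa> (fv w) x \<le> c * fv w x + c'"
    and K: "K > 0"
  shows "(\<integral>\<^sup>+ b. ennreal (jump_rate (comp_rate R \<kappa> s kI kE kF kC \<mu> \<psi>) a b) * ennreal (min (GG w b) K) \<partial>count_space UNIV)
    \<le> ennreal (enn2real (total_rate (comp_rate R \<kappa> s kI kE kF kC \<mu> \<psi>) a) * min (GG w a) K
          + (max c c' + kF / w s) * min (GG w a) K + kI * (\<integral> x. min (fv w x + 1) K \<partial>\<mu>))"
proof -
  define Q where "Q = comp_rate R \<kappa> s kI kE kF kC \<mu> \<psi>"
  define V where "V = (\<lambda>b. min (GG w b) K)"
  define l where "l = max c c' + kF / w s"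
  define D where "D = kI * (\<integral> x. min (fv w x + 1) K \<partial>\<mu>)"
  define q where "q = enn2real (total_rate Q a)"
  have fv0: "fv w x \<ge> 0" for x by (rule fv_nonneg[OF w])
  have G0: "GG w b \<ge> 0" for b by (rule GG_nonneg[OF w])
  have V0: "V b \<ge> 0" for b using G0 K unfolding V_def by simp
  have VK: "V b \<le> K" for b unfolding V_def by simp
  have l0: "l > 0" unfolding l_def using c kF w[of s] by (simp add: add_pos_nonneg)
  have D0: "D \<ge> 0" unfolding D_def using kI fv0 K by (intro mult_nonneg_nonneg integral_nonneg_AE AE_I2) auto
  have q0: "q \<ge> 0" unfolding q_def by simp
  have Q0: "\<And>b. Q a b \<ge> 0" unfolding Q_def by (rule cr_nonneg[OF \<kappa> kI kE kF kC])
  have tot: "total_rate Q a = ennreal q"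
    unfolding q_def Q_def using total_fin[OF R \<kappa> kI kE kF kC] by (simp add: less_top)
  have jrc: "(\<integral>\<^sup>+ b. ennreal (jump_rate Q a b) * ennreal C \<partial>count_space UNIV) = ennreal (q * C)" if "C \<ge> 0" for C
  proof -
    have "(\<integral>\<^sup>+ b. ennreal (jump_rate Q a b) * ennreal C \<partial>count_space UNIV) = total_rate Q a * ennreal C"
      unfolding total_rate_def by (rule nn_integral_multc) simp
    then show ?thesis using tot that q0 by (simp add: ennreal_mult'')
  qed
  have goal: "(\<integral>\<^sup>+ b. ennreal (jump_rate Q a b) * ennreal (V b) \<partial>count_space UNIV) \<le> ennreal (q * V a + l * V a + D)"
  proof (cases "GG w a < K")
    case False
    then have VaK: "V a = K" unfolding V_def by simp
    have "(\<integral>\<^sup>+ b. ennreal (jump_rate Q a b) * ennreal (V b) \<partial>count_space UNIV)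
        \<le> (\<integral>\<^sup>+ b. ennreal (jump_rate Q a b) * ennreal K \<partial>count_space UNIV)"
      by (intro nn_integral_mono mult_left_mono ennreal_leI VK) simp
    also have "\<dots> = ennreal (q * K)" using jrc K by simp
    also have "\<dots> \<le> ennreal (q * V a + l * V a + D)"
      using VaK l0 K D0 by (intro ennreal_leI) simp
    finally show ?thesis .
  next
    case True
    define G where "G = GG w a"
    have VaG: "V a = G" unfolding V_def G_def using True by simp
    have G0': "G \<ge> 0" unfolding G_def by (rule G0)
    have hcr: "(\<integral>\<^sup>+ b. ennreal (Q a b) * ennreal (V b) \<partial>count_space UNIV) = ennreal (TR R \<kappa> s kI kE kF kC \<mu> \<psi> a V)"
      unfolding Q_def by (rule comp_decomp_real[OF R \<kappa> kI kE kF kC, where B = K]) (use V0 VK in auto)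
    have hcG: "(\<integral>\<^sup>+ b. ennreal (Q a b) * ennreal G \<partial>count_space UNIV) = ennreal (TR R \<kappa> s kI kE kF kC \<mu> \<psi> a (\<lambda>_. G))"
      unfolding Q_def by (rule comp_decomp_real[OF R \<kappa> kI kE kF kC, where B = G]) (use G0' in auto)
    have dr: "TR R \<kappa> s kI kE kF kC \<mu> \<psi> a V \<le> TR R \<kappa> s kI kE kF kC \<mu> \<psi> a (\<lambda>_. G) + (l * G + D)"
      using drift_real[OF R \<kappa> kI kE kF kC psi w c c' chem K True, of s \<mu>]
      unfolding V_def G_def l_def D_def by simp
    have "l * G + D \<ge> 0" using l0 G0' D0 by simp
    then have "ennreal (TR R \<kappa> s kI kE kF kC \<mu> \<psi> a V) \<le> ennreal (TR R \<kappa> s kI kE kF kC \<mu> \<psi> a (\<lambda>_. G)) + ennreal (l * G + D)"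
      using dr by (intro ennreal_le_plus_real)
    then have "(\<integral>\<^sup>+ b. ennreal (Q a b) * ennreal (V b) \<partial>count_space UNIV)
        \<le> (\<integral>\<^sup>+ b. ennreal (Q a b) * ennreal G \<partial>count_space UNIV) + ennreal (l * G + D)"
      unfolding hcr hcG .
    then have "ennreal (Q a a) * ennreal (V a) + (\<integral>\<^sup>+ b. ennreal (jump_rate Q a b) * ennreal (V b) \<partial>count_space UNIV)
        \<le> ennreal (Q a a) * ennreal (V a) + (ennreal (q * G) + ennreal (l * G + D))"
      unfolding split_self[of Q a, OF Q0] jrc[OF G0'] VaG by (simp add: ac_simps)
    then have "(\<integral>\<^sup>+ b. ennreal (jump_rate Q a b) * ennreal (V b) \<partial>count_space UNIV) \<le> ennreal (q * G) + ennreal (l * G + D)"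
      by (subst (asm) ennreal_add_left_cancel_le) (simp add: ennreal_mult_eq_top_iff)
    also have "\<dots> = ennreal (q * V a + l * V a + D)"
      using VaG q0 G0' l0 D0 by (simp add: ennreal_plus[symmetric] add.assoc del: ennreal_plus)
    finally show ?thesis .
  qed
  then show ?thesis unfolding Q_def V_def l_def D_def q_def .
qed



lemma size_le_GG: "(\<And>j. w j > 0) \<Longrightarrow> real (size n) \<le> GG w n"
proof (induction n)
  case empty then show ?case by (simp add: GG_def)
next
  case (add x n)
  then show ?case using fv_nonneg[of w x] by (simp add: GG_add)
qed

lemma elem_le_GG: "(\<And>j. w j > 0) \<Longrightarrow> x \<in># n \<Longrightarrow> fv w x + 1 \<le> GG w n"
  using GG_minus1[of x n w] GG_nonneg[of w "n - {#x#}"] by simp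

lemma sub_finite:
  fixes w :: "'i::finite \<Rightarrow> real"
  assumes w: "\<And>j. w j > 0"
  shows "finite {n. GG w n \<le> m}"
proof -
  define B where "B = nat \<lceil>\<Sum>j\<in>UNIV. \<bar>m\<bar> / w j\<rceil>"
  define X where "X = {x :: 'i \<Rightarrow> nat. \<forall>j. x j \<in> {..B}}"
  define M where "M = nat \<lceil>m\<rceil>"
  have "X = {f. \<forall>j. (j \<in> UNIV \<longrightarrow> f j \<in> {..B}) \<and> (j \<notin> UNIV \<longrightarrow> f j = 0)}"
    unfolding X_def by simp
  then have finX: "finite X" using finite_set_of_finite_funs[of "UNIV :: 'i set" "{..B}" 0] by simp
  have "{n. GG w n \<le> m} \<subseteq> (\<Union>k\<in>{..M}. multisets_of_size X k)"
  proof
    fix n assume "n \<in> {n. GG w n \<le> m}"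
    then have n: "GG w n \<le> m" by simp
    have "real (size n) \<le> m" using size_le_GG[of w n, OF w] n by simp
    then have sz: "size n \<le> M" unfolding M_def by linarith
    have "set_mset n \<subseteq> X"
    proof
      fix x assume x: "x \<in># n"
      show "x \<in> X" unfolding X_def mem_Collect_eq
      proof (intro allI)
        fix j
        have "w j * real (x j) \<le> fv w x" by (rule fv_single[OF w])
        also have "\<dots> \<le> m" using elem_le_GG[of w x n, OF w x] n by simp
        finally have "w j * real (x j) \<le> m" .
        then have "real (x j) \<le> m / w j" using w[of j] by (simp add: field_simps)
        also have "\<dots> \<le> \<bar>m\<bar> / w j" using w[of j] by (simp add: divide_right_mono)
        also have "\<dots> \<le> (\<Sum>j\<in>UNIV. \<bar>m\<bar> / w j)"
          by (rule member_le_sum[where f = "\<lambda>j. \<bar>m\<bar> / w j"]) (use w in \<open>auto intro: divide_nonneg_pos\<close>)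
        finally have "real (x j) \<le> (\<Sum>j\<in>UNIV. \<bar>m\<bar> / w j)" .
        then show "x j \<in> {..B}" unfolding B_def by simp linarith
      qed
    qed
    then show "n \<in> (\<Union>k\<in>{..M}. multisets_of_size X k)"
      using sz unfolding multisets_of_size_def by auto
  qed
  moreover have "finite (\<Union>k\<in>{..M}. multisets_of_size X k)"
    using finX by auto
  ultimately show ?thesis by (rule finite_subset)
qed

lemma trunc_mean:
  fixes Y :: "'a \<Rightarrow> real" and p :: "'a pmf"
  assumes Y0: "\<And>x. Y x \<ge> 0" and \<delta>: "\<delta> > 0"
  shows "\<exists>K0>0. \<forall>K\<ge>K0. (\<integral> x. min (Y x) K \<partial>p) \<le> \<delta> * K"
proof -
  define A where "A i = {x. real i < Y x}" for i :: nat
  have dec: "decseq A" unfolding A_def decseq_def by auto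
  have emp: "(\<Inter>i. A i) = {}"
  proof (rule ccontr)
    assume "(\<Inter>i. A i) \<noteq> {}"
    then obtain x where "\<forall>i. x \<in> A i" by blast
    then have "\<forall>i. real i < Y x" unfolding A_def by auto
    moreover obtain i where "Y x < real i" using reals_Archimedean2 by blast
    ultimately show False by (meson less_asym)
  qed
  have "(\<lambda>i. measure_pmf.prob p (A i)) \<longlonglongrightarrow> measure_pmf.prob p (\<Inter>i. A i)"
    by (rule measure_pmf.finite_Lim_measure_decseq) (use dec in auto)
  then have lim: "(\<lambda>i. measure_pmf.prob p (A i)) \<longlonglongrightarrow> 0" unfolding emp by simp
  have "\<delta> / 2 > 0" using \<delta> by simp
  from order_tendstoD(2)[OF lim this] obtain N where N: "measure_pmf.prob p (A N) < \<delta> / 2"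
    by (auto simp: eventually_sequentially)
  define M where "M = real N"
  have M0: "M \<ge> 0" unfolding M_def by simp
  define K0 where "K0 = 2 * M / \<delta> + 1"
  have K0: "K0 > 0" unfolding K0_def using M0 \<delta> by (simp add: add_nonneg_pos)
  have "\<forall>K\<ge>K0. (\<integral> x. min (Y x) K \<partial>p) \<le> \<delta> * K"
  proof (intro allI impI)
    fix K assume K: "K \<ge> K0"
    then have Kpos: "K > 0" using K0 by simp
    have intA: "integrable (measure_pmf p) (indicator (A N) :: 'a \<Rightarrow> real)"
      by (rule pmf_integrable_bdd[where B = 1]) (auto split: split_indicator)
    have "(\<integral> x. min (Y x) K \<partial>p) \<le> (\<integral> x. M + K * indicator (A N) x \<partial>p)"
    proof (rule integral_mono)
      show "integrable (measure_pmf p) (\<lambda>x. min (Y x) K)"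
        by (rule pmf_integrable_bdd[where B = K]) (use Y0 Kpos in auto)
      show "integrable (measure_pmf p) (\<lambda>x. M + K * indicator (A N) x)"
        using intA by simp
      fix x
      show "min (Y x) K \<le> M + K * indicator (A N) x"
        using M0 Kpos unfolding A_def M_def by (auto split: split_indicator)
    qed
    also have "\<dots> = M + K * measure_pmf.prob p (A N)"
      using intA by simp
    also have "\<dots> \<le> M + K * (\<delta> / 2)"
      using N Kpos by simp
    also have "\<dots> \<le> \<delta> * K"
    proof -
      have "2 * M / \<delta> \<le> K" using K unfolding K0_def by simp
      then have "2 * M \<le> \<delta> * K" using \<delta> by (simp add: field_simps)
      moreover have "K * (\<delta> / 2) = \<delta> * K / 2" by simp
      ultimately show ?thesis by linarith
    qed
    finally show "(\<integral> x. min (Y x) K \<partial>p) \<le> \<delta> * K" .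
  qed
  then show ?thesis using K0 by blast
qed



lemma final_real:
  fixes g0 Va D l K kI e' \<delta> :: real
  assumes "0 \<le> Va" "Va \<le> g0" "0 \<le> D" "0 < l" "0 < e'" "0 \<le> kI"
    and "\<delta> = e' * l / (2 * (kI + 1))"
    and "D \<le> kI * (\<delta> * K)" "K \<ge> 2 * (g0 + 1) / e'" "K > 0"
  shows "(Va + D / l) / (K / 2) \<le> 2 * e'"
proof -
  have "(Va + D / l) / (K / 2) = 2 * Va / K + 2 * D / (l * K)"
    using assms by (simp add: field_simps)
  moreover have "2 * Va / K \<le> e'"
  proof -
    have h: "2 * (g0 + 1) \<le> e' * K" using assms by (simp add: field_simps)
    have "2 * Va \<le> 2 * (g0 + 1)" using assms(2) by simp
    then have "2 * Va \<le> e' * K" using h by (rule order_trans)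
    then show ?thesis using assms by (simp add: field_simps)
  qed
  moreover have "2 * D / (l * K) \<le> e'"
  proof -
    have "2 * D \<le> 2 * kI * \<delta> * K" using assms by simp
    also have "\<dots> = e' * l * K * (kI / (kI + 1))"
    proof -
      have "kI + 1 \<noteq> 0" using assms(6) by simp
      then show ?thesis unfolding assms(7) by (simp add: field_simps)
    qed
    also have "\<dots> \<le> e' * l * K" using assms
      by (intro mult_left_le) (auto simp: field_simps)
    finally have "2 * D \<le> e' * (l * K)" by (simp add: ac_simps)
    then show ?thesis using assms by (simp add: field_simps)
  qed
  ultimately show ?thesis by linarith
qed

theorem theorem3p1:
  fixes R :: "(('i::finite \<Rightarrow> nat) \<times> ('i \<Rightarrow> nat)) set"
    and \<kappa> :: "('i \<Rightarrow> nat) \<times> ('i \<Rightarrow> nat) \<Rightarrow> real"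
    and s :: 'i
    and kI kE kF kC :: real
    and \<mu> :: "('i \<Rightarrow> nat) pmf"
    and \<psi> :: "('i \<Rightarrow> nat) \<Rightarrow> ('i \<Rightarrow> nat) pmf"
    and w :: "'i \<Rightarrow> real"
    and c c' :: real
  assumes "finite R"
    and "\<forall>r\<in>R. \<kappa> r \<ge> 0"
    and "kI \<ge> 0" "kE \<ge> 0" "kF \<ge> 0" "kC \<ge> 0"
    and "\<forall>x. set_pmf (\<psi> x) \<subseteq> {y. \<forall>j. y j \<le> x j}"
    and "\<forall>j. w j > 0"
    and "c > 0" "c' > 0"
    and "\<forall>x. chem_gen R \<kappa> (\<lambda>z. \<Sum>j\<in>UNIV. w j * real (z j)) x
              \<le> c * (\<Sum>j\<in>UNIV. w j * real (x j)) + c'"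
  shows "\<not> ctmc_explosive (comp_rate R \<kappa> s kI kE kF kC \<mu> \<psi>)"

proof
  define Q where "Q = comp_rate R \<kappa> s kI kE kF kC \<mu> \<psi>"
  assume "ctmc_explosive (comp_rate R \<kappa> s kI kE kF kC \<mu> \<psi>)"
  then obtain a t where pos: "(INF k. jump_cdf Q k a t) > 0"
    unfolding ctmc_explosive_def Q_def by blast
  have w: "\<And>j. w j > 0" using assms(8) by simp
  have fveq: "(\<lambda>z. \<Sum>j\<in>UNIV. w j * real (z j)) = fv w" by (rule ext) (simp add: fv_def)
  have chem: "\<And>x. chem_gen R \<kappa> (fv w) x \<le> c * fv w x + c'"
    using assms(11) unfolding fveq[symmetric] by blast
  have fin: "\<And>a. total_rate Q a \<noteq> \<top>" unfolding Q_def by (rule total_fin) (use assms in auto)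
  define l where "l = max c c' + kF / w s"
  have l0: "l > 0" unfolding l_def using assms(9) assms(5) w[of s] by (simp add: add_pos_nonneg)
  define E where "E = exp (l * t)"
  have E0: "E > 0" unfolding E_def by simp
  have H: "(INF k. jump_cdf Q k a t) \<le> 0 + ennreal e" if e: "e > 0" for e
  proof -
    define e' where "e' = e / (3 * E)"
    have e'0: "e' > 0" unfolding e'_def using e E0 by simp
    define \<delta> where "\<delta> = e' * l / (2 * (kI + 1))"
    have \<delta>0: "\<delta> > 0" unfolding \<delta>_def using e'0 l0 assms(3) by simp
    obtain K0 where K0: "K0 > 0" "\<forall>K\<ge>K0. (\<integral> x. min (fv w x + 1) K \<partial>\<mu>) \<le> \<delta> * K"
    proof -
      have Y0: "\<And>x. fv w x + 1 \<ge> 0" using fv_nonneg[of w, OF w] by (simp add: add_nonneg_nonneg)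
      show ?thesis using trunc_mean[of "\<lambda>x. fv w x + 1" \<delta> \<mu>, OF Y0 \<delta>0] that by blast
    qed
    define g0 where "g0 = GG w a"
    have g00: "g0 \<ge> 0" unfolding g0_def by (rule GG_nonneg[OF w])
    define K where "K = max K0 (2 * (g0 + 1) / e')"
    have Kpos: "K > 0" unfolding K_def using K0 by simp
    have KK: "K \<ge> 2 * (g0 + 1) / e'" unfolding K_def by simp
    define m where "m = K / 2"
    have m0: "m > 0" unfolding m_def using Kpos by simp
    define S where "S = {n. GG w n \<le> m}"
    have finS: "finite S" unfolding S_def by (rule sub_finite[OF w])
    define Qm where "Qm = Max (insert 0 ((\<lambda>n. enn2real (total_rate Q n)) ` S))"
    have Qm0: "Qm \<ge> 0" unfolding Qm_def using finS by simp
    have sub: "enn2real (total_rate Q n) \<le> Qm" if "min (GG w n) K \<le> m" for n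
    proof -
      have "m < K" unfolding m_def using Kpos by simp
      then have "GG w n \<le> m" using that by linarith
      then have "n \<in> S" unfolding S_def by simp
      then show ?thesis unfolding Qm_def using finS by (intro Max_ge) auto
    qed
    define D where "D = kI * (\<integral> x. min (fv w x + 1) K \<partial>\<mu>)"
    have D0: "D \<ge> 0" unfolding D_def using assms(3) fv_nonneg[of w, OF w] Kpos
      by (intro mult_nonneg_nonneg integral_nonneg_AE AE_I2) (auto simp: add_nonneg_nonneg)
    have DK: "D \<le> kI * (\<delta> * K)" unfolding D_def using K0(2) assms(3)
      by (intro mult_left_mono) (auto simp: K_def)
    have drift: "\<And>b. (\<integral>\<^sup>+ b'. ennreal (jump_rate Q b b') * ennreal (min (GG w b') K) \<partial>count_space UNIV)
        \<le> ennreal (enn2real (total_rate Q b) * min (GG w b) K + l * min (GG w b) K + D)"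
      unfolding Q_def l_def D_def
      by (rule drift_lyap[OF assms(1,2,3,4,5,6,7) w assms(9,10) chem Kpos])
    have ly: "uu Q l k a \<le> ennreal ((Qm / (l + Qm)) ^ k + (min (GG w a) K + D / l) / m)" for k
      by (rule lyap[OF fin l0 m0 D0 _ drift sub Qm0]) (use GG_nonneg[OF w] Kpos in auto)
    have fr: "(min (GG w a) K + D / l) / m \<le> 2 * e'"
      unfolding m_def
      by (rule final_real[OF _ _ D0 l0 e'0 assms(3) \<delta>_def DK KK Kpos]) (use g00 Kpos in \<open>auto simp: g0_def\<close>)
    have \<rho>1: "Qm / (l + Qm) < 1" using Qm0 l0 by simp
    obtain k where k: "(Qm / (l + Qm)) ^ k < e'" using real_arch_pow_inv[OF e'0 \<rho>1] by blast
    have "(INF k. jump_cdf Q k a t) \<le> jump_cdf Q k a t" by (rule INF_lower) simp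
    also have "\<dots> \<le> ennreal E * uu Q l k a" unfolding E_def by (rule jump_cdf_le[OF fin l0])
    also have "\<dots> \<le> ennreal E * ennreal (3 * e')"
    proof (intro mult_left_mono)
      have "uu Q l k a \<le> ennreal ((Qm / (l + Qm)) ^ k + (min (GG w a) K + D / l) / m)" by (rule ly)
      also have "\<dots> \<le> ennreal (3 * e')" using k fr by (intro ennreal_leI) simp
      finally show "uu Q l k a \<le> ennreal (3 * e')" .
    qed simp
    also have "\<dots> = ennreal e" using E0 e'0 unfolding e'_def by (simp add: ennreal_mult''[symmetric])
    finally show ?thesis by simp
  qed
  have "(INF k. jump_cdf Q k a t) \<le> 0"
  proof (rule ennreal_le_epsilon)
    fix e :: real assume "0 < e"
    then show "(INF k. jump_cdf Q k a t) \<le> 0 + ennreal e" by (rule H)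
  qed
  from leD[OF this] pos show False by contradiction
qed


end
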